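(* Let $(X,\mathcal{M})$ be a measurable space, $\Sigma$ a compact Hausdorff group with Haar probability measure $\mu_\Sigma$ acting measurably on $X$ via $T_\sigma$. Let $n\in\mathbb{Z}^+$ and let $V$ be a linear subspace of $\mathcal{M}_b(X)^n$ that is closed under $\Sigma$ (i.e. $\gamma\circ T_\sigma\in V$ for all $\gamma\in V$, $\sigma\in\Sigma$) and satisfies $S_\Sigma[V]\subset V$. Let $H:V\times\mathcal{P}(X)\times\mathcal{P}(X)\to[-\infty,\infty)$ and $\Gamma\subset V$, and set $D_H^\Gamma(Q\|P)=\sup_{\gamma\in\Gamma}H(\gamma;Q,P)$. Suppose that for all $Q,P\in\mathcal{P}(X)$ the map $H(\cdot;Q,P)$ is concave and upper semicontinuous on $V$ with respect to the $M(X)$-topology, and that $H(\gamma\circ T_\sigma;Q,P)=H(\gamma;Q\circ T_\sigma^{-1},P\circ T_\sigma^{-1})$ for all $\sigma\in\Sigma$, $\gamma\in V$, $Q,P\in\mathcal{P}(X)$. Then for all $\Sigma$-invariant $Q,P$, $D_H^\Gamma(Q\|P)\le D_H^{S_\Sigma[\Gamma]}(Q\|P)$. If in addition $S_\Sigma[\Gamma]\subset\Gamma$, then $S_\Sigma[\Gamma]=\Gamma^{\mathrm{inv}}_\Sigma$ and $D_H^\Gamma(Q\|P)=D_H^{\Gamma^{\mathrm{inv}}_\Sigma}(Q\|P)$ for all $\Sigma$-invariant $Q,P$.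
   Context: $S_\Sigma[\gamma](x)=\int_\Sigma\gamma(T_\sigma(x))\mu_\Sigma(d\sigma)$, applied componentwise to elements of $\mathcal{M}_b(X)^n$. $\Gamma^{\mathrm{inv}}_\Sigma=\{\gamma\in\Gamma:\gamma\circ T_\sigma=\gamma\ \forall\sigma\}$. A probability measure $P$ is $\Sigma$-invariant if $P\circ T_\sigma^{-1}=P$ for all $\sigma$. $M(X)$-topology: with $M(X)$ the finite signed measures on $X$, for $\nu\in M(X)^n$ let $\tau_\nu(\gamma)=\sum_{i=1}^n\int\gamma^i d\nu_i$; $V$ is given the weakest topology making every $\tau_\nu$ continuous. *)

theory Defs
  imports "HOL-Analysis.Analysis" "HOL-Probability.Probability"
begin

text \<open>Bounded measurable R^n-valued functions on X (the underlying type, space M = UNIV),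
  i.e. elements of Mb(X)^n, componentwise.\<close>
definition Mb :: "'a measure \<Rightarrow> ('a \<Rightarrow> real^'n) set" where
  "Mb M = {\<gamma>. \<forall>i. (\<lambda>x. \<gamma> x $ i) \<in> borel_measurable M \<and> bounded (range (\<lambda>x. \<gamma> x $ i))}"

definition Prob :: "'a measure \<Rightarrow> 'a measure set" where
  "Prob M = {P. prob_space P \<and> sets P = sets M}"

text \<open>Finite signed measures on (X, M), represented by a pair (nu+, nu-) of finite measures
  (Jordan decomposition: nu = nu+ - nu-).\<close>
definition signed_meas :: "'a measure \<Rightarrow> ('a measure \<times> 'a measure) set" where
  "signed_meas M = {(p, q). finite_measure p \<and> finite_measure q \<and> sets p = sets M \<and> sets q = sets M}"

definition sintegral :: "('a measure \<times> 'a measure) \<Rightarrow> ('a \<Rightarrow> real) \<Rightarrow> real" where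
  "sintegral \<nu> f = (\<integral>x. f x \<partial>(fst \<nu>)) - (\<integral>x. f x \<partial>(snd \<nu>))"

definition tau :: "('n::finite \<Rightarrow> 'a measure \<times> 'a measure) \<Rightarrow> ('a \<Rightarrow> real^'n) \<Rightarrow> real" where
  "tau \<nu> \<gamma> = (\<Sum>i\<in>UNIV. sintegral (\<nu> i) (\<lambda>x. \<gamma> x $ i))"

definition MX_topology :: "'a measure \<Rightarrow> ('a \<Rightarrow> real^'n::finite) set \<Rightarrow> ('a \<Rightarrow> real^'n) topology" where
  "MX_topology M V = topology_generated_by
     {{\<gamma> \<in> V. tau \<nu> \<gamma> \<in> U} | \<nu> U. (\<forall>i. \<nu> i \<in> signed_meas M) \<and> open U}"

definition usc_on :: "'b topology \<Rightarrow> ('b \<Rightarrow> ereal) \<Rightarrow> bool" where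
  "usc_on X f \<longleftrightarrow> (\<forall>a. openin X {x \<in> topspace X. f x < a})"

definition Ssym :: "'g measure \<Rightarrow> ('g \<Rightarrow> 'a \<Rightarrow> 'a) \<Rightarrow> ('a \<Rightarrow> real^'n) \<Rightarrow> ('a \<Rightarrow> real^'n)" where
  "Ssym \<mu> T \<gamma> = (\<lambda>x. \<chi> i. \<integral>\<sigma>. \<gamma> (T \<sigma> x) $ i \<partial>\<mu>)"

definition Gamma_inv :: "('g \<Rightarrow> 'a \<Rightarrow> 'a) \<Rightarrow> ('a \<Rightarrow> 'b) set \<Rightarrow> ('a \<Rightarrow> 'b) set" where
  "Gamma_inv T \<Gamma> = {\<gamma> \<in> \<Gamma>. \<forall>\<sigma>. \<gamma> \<circ> T \<sigma> = \<gamma>}"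

definition invariant_meas :: "'a measure \<Rightarrow> ('g \<Rightarrow> 'a \<Rightarrow> 'a) \<Rightarrow> 'a measure \<Rightarrow> bool" where
  "invariant_meas M T P \<longleftrightarrow> (\<forall>\<sigma>. distr P M (T \<sigma>) = P)"

definition DH :: "('f \<Rightarrow> 'm \<Rightarrow> 'm \<Rightarrow> ereal) \<Rightarrow> 'f set \<Rightarrow> 'm \<Rightarrow> 'm \<Rightarrow> ereal" where
  "DH H \<Gamma> Q P = (SUP \<gamma>\<in>\<Gamma>. H \<gamma> Q P)"

end

theory Submission
  imports Defs
begin


lemma approx_finite:
  fixes \<mu> :: "'g measure" and F :: "('g \<Rightarrow> real) set"
  assumes P: "prob_space \<mu>" and sp: "space \<mu> = UNIV" and fin: "finite F"
    and meas: "\<And>\<phi>. \<phi> \<in> F \<Longrightarrow> \<phi> \<in> borel_measurable \<mu>"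
    and bnd: "\<And>\<phi>. \<phi> \<in> F \<Longrightarrow> \<exists>B. \<forall>\<sigma>. \<bar>\<phi> \<sigma>\<bar> \<le> B"
    and e: "e > 0"
  shows "\<exists>I t. finite I \<and> (\<forall>\<sigma>\<in>I. 0 \<le> t \<sigma>) \<and> sum t I = 1 \<and>
     (\<forall>\<phi>\<in>F. \<bar>(\<Sum>\<sigma>\<in>I. t \<sigma> * \<phi> \<sigma>) - integral\<^sup>L \<mu> \<phi>\<bar> < e)"
proof -
  interpret prob_space \<mu> by fact
  obtain Bf where Bf: "\<And>\<phi> \<sigma>. \<phi> \<in> F \<Longrightarrow> \<bar>\<phi> \<sigma>\<bar> \<le> Bf \<phi>"
    using bnd by metis
  define d where "d = e / 2"
  have d: "d > 0" using e by (simp add: d_def)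
  define q where "q \<sigma> = restrict (\<lambda>\<phi>. \<lfloor>\<phi> \<sigma> / d\<rfloor>) F" for \<sigma>
  define R where "R = range q"
  define K where "K \<phi> = \<lceil>Bf \<phi> / d\<rceil> + 1" for \<phi>
  have "R \<subseteq> PiE F (\<lambda>\<phi>. {- K \<phi> .. K \<phi>})"
  proof
    fix v assume "v \<in> R"
    then obtain \<sigma> where v: "v = q \<sigma>" by (auto simp: R_def)
    have "\<lfloor>\<phi> \<sigma> / d\<rfloor> \<in> {- K \<phi> .. K \<phi>}" if "\<phi> \<in> F" for \<phi>
    proof -
      have "\<bar>\<phi> \<sigma>\<bar> \<le> Bf \<phi>" using Bf that by blast
      hence "- Bf \<phi> \<le> \<phi> \<sigma>" "\<phi> \<sigma> \<le> Bf \<phi>" by auto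
      hence h: "- (Bf \<phi> / d) \<le> \<phi> \<sigma> / d" "\<phi> \<sigma> / d \<le> Bf \<phi> / d"
        using d divide_right_mono[of "- Bf \<phi>" "\<phi> \<sigma>" d] divide_right_mono[of "\<phi> \<sigma>" "Bf \<phi>" d] by auto
      have f1: "real_of_int \<lfloor>\<phi> \<sigma> / d\<rfloor> \<le> \<phi> \<sigma> / d" "\<phi> \<sigma> / d < real_of_int \<lfloor>\<phi> \<sigma> / d\<rfloor> + 1"
        by linarith+
      have f2: "Bf \<phi> / d \<le> real_of_int \<lceil>Bf \<phi> / d\<rceil>" by linarith
      have "real_of_int (- K \<phi>) \<le> real_of_int \<lfloor>\<phi> \<sigma> / d\<rfloor>" "real_of_int \<lfloor>\<phi> \<sigma> / d\<rfloor> \<le> real_of_int (K \<phi>)"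
        unfolding K_def of_int_minus of_int_add of_int_1 using h f1 f2 by linarith+
      thus ?thesis by simp
    qed
    thus "v \<in> PiE F (\<lambda>\<phi>. {- K \<phi> .. K \<phi>})" by (auto simp: v q_def)
  qed
  hence finR: "finite R" by (rule finite_subset) (intro finite_PiE fin, simp)
  define r where "r v = (SOME \<sigma>. q \<sigma> = v)" for v
  have qr: "q (r v) = v" if "v \<in> R" for v
    using that unfolding R_def r_def by (auto intro: someI)
  define A where "A v = q -` {v}" for v
  have Aeq: "A v = {\<sigma> \<in> space \<mu>. \<forall>\<phi>\<in>F. real_of_int (v \<phi>) \<le> \<phi> \<sigma> / d \<and> \<phi> \<sigma> / d < real_of_int (v \<phi>) + 1}"
    if "v \<in> R" for v
  proof -
    obtain \<sigma>0 where v: "v = q \<sigma>0" using \<open>v \<in> R\<close> by (auto simp: R_def)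
    have "q \<sigma> = q \<sigma>0 \<longleftrightarrow> (\<forall>\<phi>\<in>F. \<lfloor>\<phi> \<sigma> / d\<rfloor> = \<lfloor>\<phi> \<sigma>0 / d\<rfloor>)" for \<sigma>
      unfolding q_def restrict_def fun_eq_iff by (metis (full_types))
    thus ?thesis unfolding A_def v sp
      by (auto simp: floor_eq_iff) (auto simp: q_def)
  qed
  have Ameas: "A v \<in> sets \<mu>" if "v \<in> R" for v
    unfolding Aeq[OF that] using meas fin by measurable
  have key: "(\<lambda>\<sigma>. h (q \<sigma>)) = (\<lambda>\<sigma>. \<Sum>v\<in>R. indicator (A v) \<sigma> * h v)" for h :: "(('g \<Rightarrow> real) \<Rightarrow> int) \<Rightarrow> real"
  proof
    fix \<sigma>
    have "(\<Sum>v\<in>R. indicator (A v) \<sigma> * h v) = (\<Sum>v\<in>R. if v = q \<sigma> then h v else 0)"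
      by (intro sum.cong) (auto simp: A_def indicator_def)
    also have "\<dots> = h (q \<sigma>)" using finR by (simp add: R_def)
    finally show "h (q \<sigma>) = (\<Sum>v\<in>R. indicator (A v) \<sigma> * h v)" by simp
  qed
  have hmeas: "(\<lambda>\<sigma>. h (q \<sigma>)) \<in> borel_measurable \<mu>" for h :: "(('g \<Rightarrow> real) \<Rightarrow> int) \<Rightarrow> real"
    unfolding key using Ameas by measurable
  have hint: "integrable \<mu> (\<lambda>\<sigma>. h (q \<sigma>))" for h :: "(('g \<Rightarrow> real) \<Rightarrow> int) \<Rightarrow> real"
    unfolding key
  proof (intro Bochner_Integration.integrable_sum integrable_mult_left integrable_real_indicator)
    fix v assume "v \<in> R"
    thus "A v \<in> sets \<mu>" by (rule Ameas)
    show "emeasure \<mu> (A v) < \<infinity>" by (simp add: less_top[symmetric])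
  qed
  have hI: "(\<integral>\<sigma>. h (q \<sigma>) \<partial>\<mu>) = (\<Sum>v\<in>R. measure \<mu> (A v) * h v)" for h :: "(('g \<Rightarrow> real) \<Rightarrow> int) \<Rightarrow> real"
    unfolding key using Ameas
    by (subst Bochner_Integration.integral_sum)
       (auto simp: sp less_top[symmetric] intro!: integrable_mult_left integrable_real_indicator)
  define I where "I = r ` R"
  define t where "t \<sigma> = measure \<mu> (A (q \<sigma>))" for \<sigma>
  have injr: "inj_on r R" by (metis inj_on_inverseI qr)
  have sumI: "(\<Sum>\<sigma>\<in>I. t \<sigma> * g \<sigma>) = (\<Sum>v\<in>R. measure \<mu> (A v) * g (r v))" for g
    unfolding I_def by (subst sum.reindex[OF injr]) (auto simp: t_def qr)
  have "sum t I = (\<Sum>\<sigma>\<in>I. t \<sigma> * 1)" by simp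
  also have "\<dots> = (\<integral>\<sigma>. 1 \<partial>\<mu>)" unfolding sumI using hI[of "\<lambda>_. 1"] by simp
  also have "\<dots> = 1" by (simp add: prob_space)
  finally have sum1: "sum t I = 1" .
  have close: "\<bar>(\<Sum>\<sigma>\<in>I. t \<sigma> * \<phi> \<sigma>) - integral\<^sup>L \<mu> \<phi>\<bar> < e" if phi: "\<phi> \<in> F" for \<phi>
  proof -
    have eq: "(\<Sum>\<sigma>\<in>I. t \<sigma> * \<phi> \<sigma>) = (\<integral>\<sigma>. \<phi> (r (q \<sigma>)) \<partial>\<mu>)"
      unfolding sumI using hI[of "\<lambda>v. \<phi> (r v)"] by simp
    have pt: "\<bar>\<phi> (r (q \<sigma>)) - \<phi> \<sigma>\<bar> < d" for \<sigma>
    proof -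
      have "q (r (q \<sigma>)) = q \<sigma>" using qr[of "q \<sigma>"] by (simp add: R_def)
      hence "q (r (q \<sigma>)) \<phi> = q \<sigma> \<phi>" by simp
      hence "\<lfloor>\<phi> (r (q \<sigma>)) / d\<rfloor> = \<lfloor>\<phi> \<sigma> / d\<rfloor>" using phi by (simp add: q_def)
      hence "\<bar>\<phi> (r (q \<sigma>)) / d - \<phi> \<sigma> / d\<bar> < 1" by linarith
      hence "\<bar>(\<phi> (r (q \<sigma>)) - \<phi> \<sigma>) / d\<bar> < 1" by (simp add: diff_divide_distrib)
      thus ?thesis using d by (simp add: abs_divide)
    qed
    obtain B where B: "\<And>\<sigma>. \<bar>\<phi> \<sigma>\<bar> \<le> B" using Bf phi by blast
    have iphi: "integrable \<mu> \<phi>"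
      by (rule integrable_const_bound[where B=B]) (use B meas phi in auto)
    have ig: "integrable \<mu> (\<lambda>\<sigma>. \<phi> (r (q \<sigma>)) - \<phi> \<sigma>)"
      using hint[of "\<lambda>v. \<phi> (r v)"] iphi by auto
    have ig2: "integrable \<mu> (\<lambda>\<sigma>. \<phi> \<sigma> - \<phi> (r (q \<sigma>)))"
      using hint[of "\<lambda>v. \<phi> (r v)"] iphi by auto
    have "(\<integral>\<sigma>. \<phi> (r (q \<sigma>)) - \<phi> \<sigma> \<partial>\<mu>) \<le> d"
      by (rule integral_le_const[OF ig]) (use pt in \<open>auto simp: abs_less_iff less_imp_le\<close>)
    moreover have "(\<integral>\<sigma>. \<phi> \<sigma> - \<phi> (r (q \<sigma>)) \<partial>\<mu>) \<le> d"
      using ig2 by (intro integral_le_const) (use pt in \<open>auto simp: abs_less_iff less_imp_le\<close>)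
    moreover have "(\<integral>\<sigma>. \<phi> (r (q \<sigma>)) - \<phi> \<sigma> \<partial>\<mu>) = (\<integral>\<sigma>. \<phi> (r (q \<sigma>)) \<partial>\<mu>) - integral\<^sup>L \<mu> \<phi>"
      using hint[of "\<lambda>v. \<phi> (r v)"] iphi by simp
    moreover have "(\<integral>\<sigma>. \<phi> \<sigma> - \<phi> (r (q \<sigma>)) \<partial>\<mu>) = integral\<^sup>L \<mu> \<phi> - (\<integral>\<sigma>. \<phi> (r (q \<sigma>)) \<partial>\<mu>)"
      using hint[of "\<lambda>v. \<phi> (r v)"] iphi by simp
    ultimately show ?thesis unfolding eq d_def using e by linarith
  qed
  have "finite I" using finR by (simp add: I_def)
  moreover have "\<forall>\<sigma>\<in>I. 0 \<le> t \<sigma>" by (simp add: t_def)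
  ultimately show ?thesis using sum1 close by blast
qed


lemma fub_lemma:
  fixes \<mu> :: "'g::topological_space measure" and N M :: "'a measure" and g :: "'g \<Rightarrow> 'a \<Rightarrow> real"
  assumes P: "prob_space \<mu>" and sm: "sets \<mu> = sets (borel :: 'g measure)"
    and FN: "finite_measure N" and sN: "sets N = sets M"
    and gm: "case_prod g \<in> borel_measurable (borel \<Otimes>\<^sub>M M)" and gb: "\<And>s x. \<bar>g s x\<bar> \<le> B"
  shows "(\<lambda>s. \<integral>x. g s x \<partial>N) \<in> borel_measurable \<mu>"
    and "\<And>s. \<bar>\<integral>x. g s x \<partial>N\<bar> \<le> B * measure N (space N)"
    and "(\<integral>s. (\<integral>x. g s x \<partial>N) \<partial>\<mu>) = (\<integral>x. (\<integral>s. g s x \<partial>\<mu>) \<partial>N)"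
proof -
  interpret \<mu>: prob_space \<mu> by fact
  interpret N: finite_measure N by fact
  interpret pair_sigma_finite \<mu> N by unfold_locales
  have sp: "sets (\<mu> \<Otimes>\<^sub>M N) = sets (borel \<Otimes>\<^sub>M M)"
    by (rule sets_pair_measure_cong) (use sm sN in auto)
  have gm': "case_prod g \<in> borel_measurable (\<mu> \<Otimes>\<^sub>M N)"
    using gm measurable_cong_sets[OF sp refl] by blast
  show "(\<lambda>s. \<integral>x. g s x \<partial>N) \<in> borel_measurable \<mu>"
    by (rule N.borel_measurable_lebesgue_integral) (rule gm')
  show "\<bar>\<integral>x. g s x \<partial>N\<bar> \<le> B * measure N (space N)" for s
  proof -
    have gms: "g s \<in> borel_measurable N"
      using measurable_Pair2[OF gm', of s] sets_eq_imp_space_eq[OF sm] by simp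
    have ig: "integrable N (g s)"
      by (rule N.integrable_const_bound[where B=B]) (use gb gms in auto)
    have "\<bar>\<integral>x. g s x \<partial>N\<bar> \<le> (\<integral>x. \<bar>g s x\<bar> \<partial>N)"
      by (rule integral_abs_bound)
    also have "\<dots> \<le> (\<integral>x. B \<partial>N)"
      by (rule integral_mono) (use ig gb in auto)
    also have "\<dots> = B * measure N (space N)" by simp
    finally show ?thesis .
  qed
  have fin: "finite_measure (\<mu> \<Otimes>\<^sub>M N)"
    by (rule finite_measure_pair_measure) (auto intro: FN \<mu>.finite_measure_axioms)
  have "integrable (\<mu> \<Otimes>\<^sub>M N) (case_prod g)"
    by (rule finite_measure.integrable_const_bound[OF fin, where B=B]) (use gb gm' in auto)
  from Fubini_integral[OF this]
  show "(\<integral>s. (\<integral>x. g s x \<partial>N) \<partial>\<mu>) = (\<integral>x. (\<integral>s. g s x \<partial>\<mu>) \<partial>N)" by simp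
qed


lemma ereal_convex_const:
  fixes c :: ereal assumes "0 < t" "t < 1"
  shows "ereal t * c + ereal (1 - t) * c = c"
  using assms by (cases c) (auto simp: algebra_simps)

lemma V_finite_comb:
  fixes V :: "('a \<Rightarrow> real^'n) set"
  assumes V_zero: "(\<lambda>x. 0) \<in> V"
    and V_add: "\<And>\<gamma>1 \<gamma>2. \<gamma>1 \<in> V \<Longrightarrow> \<gamma>2 \<in> V \<Longrightarrow> (\<lambda>x. \<gamma>1 x + \<gamma>2 x) \<in> V"
    and V_scale: "\<And>c \<gamma>. \<gamma> \<in> V \<Longrightarrow> (\<lambda>x. c *\<^sub>R \<gamma> x) \<in> V"
  shows "finite I \<Longrightarrow> (\<forall>i\<in>I. g i \<in> V) \<Longrightarrow> (\<lambda>x. \<Sum>i\<in>I. t i *\<^sub>R g i x) \<in> V"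
proof (induction I rule: finite_induct)
  case empty
  then show ?case using V_zero by simp
next
  case (insert i I)
  then show ?case using V_add[OF V_scale[of "g i" "t i"]] by simp
qed

lemma concave_finite:
  fixes V :: "('a \<Rightarrow> real^'n) set" and h :: "('a \<Rightarrow> real^'n) \<Rightarrow> ereal"
  assumes V_zero: "(\<lambda>x. 0) \<in> V"
    and V_add: "\<And>\<gamma>1 \<gamma>2. \<gamma>1 \<in> V \<Longrightarrow> \<gamma>2 \<in> V \<Longrightarrow> (\<lambda>x. \<gamma>1 x + \<gamma>2 x) \<in> V"
    and V_scale: "\<And>c \<gamma>. \<gamma> \<in> V \<Longrightarrow> (\<lambda>x. c *\<^sub>R \<gamma> x) \<in> V"
    and conc: "\<And>\<gamma>1 \<gamma>2 t. \<gamma>1 \<in> V \<Longrightarrow> \<gamma>2 \<in> V \<Longrightarrow> 0 < t \<Longrightarrow> t < 1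
        \<Longrightarrow> ereal t * h \<gamma>1 + ereal (1 - t) * h \<gamma>2 \<le> h (\<lambda>x. t *\<^sub>R \<gamma>1 x + (1 - t) *\<^sub>R \<gamma>2 x)"
  shows "finite I \<Longrightarrow> (\<forall>i\<in>I. g i \<in> V \<and> c \<le> h (g i)) \<Longrightarrow> (\<forall>i\<in>I. 0 \<le> t i) \<Longrightarrow> sum t I = 1
     \<Longrightarrow> c \<le> h (\<lambda>x. \<Sum>i\<in>I. t i *\<^sub>R g i x)"
proof (induction I arbitrary: t rule: finite_induct)
  case empty
  then show ?case by simp
next
  case (insert i I)
  have ti: "0 \<le> t i" using insert by auto
  have tI: "\<forall>j\<in>I. 0 \<le> t j" using insert by auto
  have st: "t i + sum t I = 1" using insert by simp
  have sI: "0 \<le> sum t I" using tI by (simp add: sum_nonneg)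
  have gi: "g i \<in> V" "c \<le> h (g i)" using insert by auto
  have gI: "\<forall>j\<in>I. g j \<in> V" using insert by auto
  consider "t i = 1" | "t i = 0" | "0 < t i \<and> t i < 1" using ti st sI by linarith
  then show ?case
  proof cases
    case 1
    hence "sum t I = 0" using st by simp
    hence z: "\<forall>j\<in>I. t j = 0" using sum_nonneg_eq_0_iff[OF insert(1)] tI by blast
    have "(\<lambda>x. \<Sum>j\<in>insert i I. t j *\<^sub>R g j x) = g i"
      using insert(1,2) 1 z by (simp add: fun_eq_iff)
    thus ?thesis using gi by simp
  next
    case 2
    have "(\<lambda>x. \<Sum>j\<in>insert i I. t j *\<^sub>R g j x) = (\<lambda>x. \<Sum>j\<in>I. t j *\<^sub>R g j x)"
      using insert(1,2) 2 by (simp add: fun_eq_iff)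
    moreover have "c \<le> h (\<lambda>x. \<Sum>j\<in>I. t j *\<^sub>R g j x)"
      using insert.IH[of t] insert.prems tI st 2 by auto
    ultimately show ?thesis by simp
  next
    case 3
    define s where "s = sum t I"
    have s: "s = 1 - t i" "0 < s" using st 3 by (auto simp: s_def)
    define t' where "t' j = t j / s" for j
    have "sum t' I = 1" using s by (simp add: t'_def s_def sum_divide_distrib[symmetric])
    moreover have "\<forall>j\<in>I. 0 \<le> t' j" using tI s by (simp add: t'_def)
    ultimately have IH: "c \<le> h (\<lambda>x. \<Sum>j\<in>I. t' j *\<^sub>R g j x)"
      using insert.IH[of t'] insert.prems by auto
    define \<eta> where "\<eta> = (\<lambda>x. \<Sum>j\<in>I. t' j *\<^sub>R g j x)"
    have etaV: "\<eta> \<in> V" unfolding \<eta>_def by (rule V_finite_comb[OF V_zero V_add V_scale insert(1) gI])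
    have eq: "(\<lambda>x. \<Sum>j\<in>insert i I. t j *\<^sub>R g j x) = (\<lambda>x. t i *\<^sub>R g i x + (1 - t i) *\<^sub>R \<eta> x)"
    proof
      fix x
      have "(1 - t i) *\<^sub>R \<eta> x = (\<Sum>j\<in>I. (s * t' j) *\<^sub>R g j x)"
        unfolding \<eta>_def s(1)[symmetric] by (simp add: scaleR_sum_right)
      also have "\<dots> = (\<Sum>j\<in>I. t j *\<^sub>R g j x)" using s by (simp add: t'_def)
      finally show "(\<Sum>j\<in>insert i I. t j *\<^sub>R g j x) = t i *\<^sub>R g i x + (1 - t i) *\<^sub>R \<eta> x"
        using insert(1,2) by simp
    qed
    have "c = ereal (t i) * c + ereal (1 - t i) * c" using 3 by (simp add: ereal_convex_const)
    also have "\<dots> \<le> ereal (t i) * h (g i) + ereal (1 - t i) * h \<eta>"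
      using gi(2) IH 3 unfolding \<eta>_def
      by (intro add_mono ereal_mult_left_mono) auto
    also have "\<dots> \<le> h (\<lambda>x. t i *\<^sub>R g i x + (1 - t i) *\<^sub>R \<eta> x)"
      using conc[OF gi(1) etaV] 3 by auto
    finally show ?thesis unfolding eq .
  qed
qed


lemma nbhd_lemma:
  fixes M :: "'a measure" and V :: "('a \<Rightarrow> real^'n::finite) set"
  assumes "generate_topology_on
     {{\<gamma> \<in> V. tau \<nu> \<gamma> \<in> U} | \<nu> U. (\<forall>i. \<nu> i \<in> signed_meas M) \<and> open U} W"
  shows "s \<in> W \<Longrightarrow> \<exists>F e. finite F \<and> (\<forall>\<nu>\<in>F. \<forall>i. \<nu> i \<in> signed_meas M) \<and> e > 0 \<and>
           (\<forall>\<eta>\<in>V. (\<forall>\<nu>\<in>F. \<bar>tau \<nu> \<eta> - tau \<nu> s\<bar> < e) \<longrightarrow> \<eta> \<in> W)"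
  using assms
proof (induction rule: generate_topology_on.induct)
  case Empty
  then show ?case by simp
next
  case (Int a b)
  then obtain F1 e1 F2 e2 where
    1: "finite F1" "\<forall>\<nu>\<in>F1. \<forall>i. \<nu> i \<in> signed_meas M" "e1 > 0"
       "\<forall>\<eta>\<in>V. (\<forall>\<nu>\<in>F1. \<bar>tau \<nu> \<eta> - tau \<nu> s\<bar> < e1) \<longrightarrow> \<eta> \<in> a" and
    2: "finite F2" "\<forall>\<nu>\<in>F2. \<forall>i. \<nu> i \<in> signed_meas M" "e2 > 0"
       "\<forall>\<eta>\<in>V. (\<forall>\<nu>\<in>F2. \<bar>tau \<nu> \<eta> - tau \<nu> s\<bar> < e2) \<longrightarrow> \<eta> \<in> b"
    by auto
  show ?case
    by (rule exI[of _ "F1 \<union> F2"], rule exI[of _ "min e1 e2"]) (use 1 2 in auto)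
next
  case (UN K)
  then obtain k where "k \<in> K" "s \<in> k" by auto
  with UN.IH[OF this] show ?case by blast
next
  case (Basis w)
  then obtain \<nu> U where w: "w = {\<gamma> \<in> V. tau \<nu> \<gamma> \<in> U}" "\<forall>i. \<nu> i \<in> signed_meas M" "open U"
    by auto
  with Basis have "tau \<nu> s \<in> U" by auto
  then obtain e where e: "e > 0" "ball (tau \<nu> s) e \<subseteq> U" using w(3) openE by blast
  show ?case
  proof (rule exI[of _ "{\<nu>}"], rule exI[of _ e], intro conjI ballI impI)
    fix \<eta> assume "\<eta> \<in> V" "\<forall>\<nu>'\<in>{\<nu>}. \<bar>tau \<nu>' \<eta> - tau \<nu>' s\<bar> < e"
    then show "\<eta> \<in> w" using e w by (auto simp: dist_real_def subset_iff)
  qed (use w e in auto)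
qed


lemma tau_lin:
  fixes \<nu> :: "'n::finite \<Rightarrow> 'a measure \<times> 'a measure" and g :: "'s \<Rightarrow> 'a \<Rightarrow> real^'n"
  assumes fin: "finite I"
    and ig: "\<And>\<sigma> i. \<sigma> \<in> I \<Longrightarrow> integrable (fst (\<nu> i)) (\<lambda>x. g \<sigma> x $ i) \<and> integrable (snd (\<nu> i)) (\<lambda>x. g \<sigma> x $ i)"
  shows "tau \<nu> (\<lambda>x. \<Sum>\<sigma>\<in>I. t \<sigma> *\<^sub>R g \<sigma> x) = (\<Sum>\<sigma>\<in>I. t \<sigma> * tau \<nu> (g \<sigma>))"
proof -
  have "sintegral (\<nu> i) (\<lambda>x. (\<Sum>\<sigma>\<in>I. t \<sigma> *\<^sub>R g \<sigma> x) $ i) = (\<Sum>\<sigma>\<in>I. t \<sigma> * sintegral (\<nu> i) (\<lambda>x. g \<sigma> x $ i))" for i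
  proof -
    have c: "(\<lambda>x. (\<Sum>\<sigma>\<in>I. t \<sigma> *\<^sub>R g \<sigma> x) $ i) = (\<lambda>x. \<Sum>\<sigma>\<in>I. t \<sigma> * g \<sigma> x $ i)"
      by (simp add: sum_component)
    show ?thesis unfolding c sintegral_def
      using ig
      by (simp add: Bochner_Integration.integral_sum sum_subtractf[symmetric] right_diff_distrib)
  qed
  hence "tau \<nu> (\<lambda>x. \<Sum>\<sigma>\<in>I. t \<sigma> *\<^sub>R g \<sigma> x) = (\<Sum>i\<in>UNIV. \<Sum>\<sigma>\<in>I. t \<sigma> * sintegral (\<nu> i) (\<lambda>x. g \<sigma> x $ i))"
    by (simp add: tau_def)
  also have "\<dots> = (\<Sum>\<sigma>\<in>I. t \<sigma> * tau \<nu> (g \<sigma>))"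
    by (subst sum.swap) (simp add: tau_def sum_distrib_left)
  finally show ?thesis .
qed

theorem theorem2:
  fixes M :: "'a measure"
    and \<mu> :: "'g::{topological_group_add, t2_space} measure"
    and T :: "'g \<Rightarrow> 'a \<Rightarrow> 'a"
    and V \<Gamma> :: "('a \<Rightarrow> real^'n::finite) set"
    and H :: "('a \<Rightarrow> real^'n) \<Rightarrow> 'a measure \<Rightarrow> 'a measure \<Rightarrow> ereal"
  assumes space_M: "space M = UNIV"
    and compact_G: "compact (UNIV :: 'g set)"
    and haar_prob: "prob_space \<mu>" "sets \<mu> = sets (borel :: 'g measure)"
    and haar_left: "\<And>g. distr \<mu> borel (\<lambda>\<sigma>. g + \<sigma>) = \<mu>"
    and haar_right: "\<And>g. distr \<mu> borel (\<lambda>\<sigma>. \<sigma> + g) = \<mu>"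
    and act_zero: "T 0 = id"
    and act_add: "\<And>\<sigma> \<tau>. T (\<sigma> + \<tau>) = T \<sigma> \<circ> T \<tau>"
    and act_meas: "(\<lambda>p. T (fst p) (snd p)) \<in> measurable (borel \<Otimes>\<^sub>M M) M"
    and V_sub: "V \<subseteq> Mb M"
    and V_zero: "(\<lambda>x. 0) \<in> V"
    and V_add: "\<And>\<gamma>1 \<gamma>2. \<gamma>1 \<in> V \<Longrightarrow> \<gamma>2 \<in> V \<Longrightarrow> (\<lambda>x. \<gamma>1 x + \<gamma>2 x) \<in> V"
    and V_scale: "\<And>c \<gamma>. \<gamma> \<in> V \<Longrightarrow> (\<lambda>x. c *\<^sub>R \<gamma> x) \<in> V"
    and V_closed: "\<And>\<gamma> \<sigma>. \<gamma> \<in> V \<Longrightarrow> \<gamma> \<circ> T \<sigma> \<in> V"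
    and V_sym: "Ssym \<mu> T ` V \<subseteq> V"
    and Gamma_sub: "\<Gamma> \<subseteq> V"
    and H_fin: "\<And>\<gamma> Q P. \<gamma> \<in> V \<Longrightarrow> Q \<in> Prob M \<Longrightarrow> P \<in> Prob M \<Longrightarrow> H \<gamma> Q P \<noteq> \<infinity>"
    and H_concave: "\<And>Q P \<gamma>1 \<gamma>2 t. Q \<in> Prob M \<Longrightarrow> P \<in> Prob M \<Longrightarrow> \<gamma>1 \<in> V \<Longrightarrow> \<gamma>2 \<in> V
        \<Longrightarrow> 0 < t \<Longrightarrow> t < 1
        \<Longrightarrow> ereal t * H \<gamma>1 Q P + ereal (1 - t) * H \<gamma>2 Q P
            \<le> H (\<lambda>x. t *\<^sub>R \<gamma>1 x + (1 - t) *\<^sub>R \<gamma>2 x) Q P"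
    and H_usc: "\<And>Q P. Q \<in> Prob M \<Longrightarrow> P \<in> Prob M \<Longrightarrow> usc_on (MX_topology M V) (\<lambda>\<gamma>. H \<gamma> Q P)"
    and H_equiv: "\<And>\<sigma> \<gamma> Q P. \<gamma> \<in> V \<Longrightarrow> Q \<in> Prob M \<Longrightarrow> P \<in> Prob M
        \<Longrightarrow> H (\<gamma> \<circ> T \<sigma>) Q P = H \<gamma> (distr Q M (T \<sigma>)) (distr P M (T \<sigma>))"
  shows "(\<forall>Q P. Q \<in> Prob M \<longrightarrow> P \<in> Prob M \<longrightarrow> invariant_meas M T Q \<longrightarrow> invariant_meas M T P
            \<longrightarrow> DH H \<Gamma> Q P \<le> DH H (Ssym \<mu> T ` \<Gamma>) Q P)
       \<and> (Ssym \<mu> T ` \<Gamma> \<subseteq> \<Gamma> \<longrightarrow>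
            Ssym \<mu> T ` \<Gamma> = Gamma_inv T \<Gamma>
            \<and> (\<forall>Q P. Q \<in> Prob M \<longrightarrow> P \<in> Prob M \<longrightarrow> invariant_meas M T Q \<longrightarrow> invariant_meas M T P
                 \<longrightarrow> DH H \<Gamma> Q P = DH H (Gamma_inv T \<Gamma>) Q P))"
proof -
  interpret mu: prob_space \<mu> by (rule haar_prob(1))
  have sp_mu: "space \<mu> = UNIV" using sets_eq_imp_space_eq[OF haar_prob(2)] by simp
  have Tm: "T \<sigma> \<in> measurable M M" for \<sigma>
  proof -
    have "Pair \<sigma> \<in> measurable M (borel \<Otimes>\<^sub>M M)" by (rule measurable_Pair1') simp
    from measurable_comp[OF this act_meas] show ?thesis by (simp add: comp_def)
  qed
  have Vmeas: "(\<lambda>x. \<gamma> x $ i) \<in> borel_measurable M" if "\<gamma> \<in> V" for \<gamma> i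
    using V_sub that by (auto simp: Mb_def)
  have Vbnd: "\<exists>B. \<forall>x. \<bar>\<gamma> x $ i\<bar> \<le> B" if "\<gamma> \<in> V" for \<gamma> i
  proof -
    have "bounded (range (\<lambda>x. \<gamma> x $ i))" using V_sub that by (auto simp: Mb_def)
    thus ?thesis unfolding bounded_real by auto
  qed
  have prodm: "(\<lambda>(\<sigma>, x). \<gamma> (T \<sigma> x) $ i) \<in> borel_measurable (borel \<Otimes>\<^sub>M M)" if "\<gamma> \<in> V" for \<gamma> i
  proof -
    have "(\<lambda>x. \<gamma> x $ i) \<circ> (\<lambda>p. T (fst p) (snd p)) \<in> borel_measurable (borel \<Otimes>\<^sub>M M)"
      by (rule measurable_comp[OF act_meas Vmeas[OF that]])
    moreover have "(\<lambda>(\<sigma>, x). \<gamma> (T \<sigma> x) $ i) = (\<lambda>x. \<gamma> x $ i) \<circ> (\<lambda>p. T (fst p) (snd p))"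
      by (auto simp: fun_eq_iff)
    ultimately show ?thesis by simp
  qed
  have intN: "integrable N (\<lambda>x. \<gamma> (T \<sigma> x) $ i)"
    if gNV: "\<gamma> \<in> V" "finite_measure N" "sets N = sets M" for \<gamma> \<sigma> i N
  proof -
    have "(\<lambda>x. \<gamma> x $ i) \<circ> T \<sigma> \<in> borel_measurable M" by (rule measurable_comp[OF Tm Vmeas[OF that(1)]])
    hence m0: "(\<lambda>x. \<gamma> (T \<sigma> x) $ i) \<in> borel_measurable M" by (simp add: comp_def)
    have m: "(\<lambda>x. \<gamma> (T \<sigma> x) $ i) \<in> borel_measurable N"
      by (subst measurable_cong_sets[OF that(3) refl]) (rule m0)
    obtain B where "\<forall>x. \<bar>\<gamma> x $ i\<bar> \<le> B" using Vbnd[OF gNV(1)] by blast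
    thus ?thesis by (intro finite_measure.integrable_const_bound[OF gNV(2), where B=B]) (use m in auto)
  qed
  have sm: "finite_measure (fst (\<nu> i)) \<and> sets (fst (\<nu> i)) = sets M \<and> finite_measure (snd (\<nu> i)) \<and> sets (snd (\<nu> i)) = sets M"
    if "\<nu> i \<in> signed_meas M" for \<nu> :: "'n \<Rightarrow> 'a measure \<times> 'a measure" and i
    using that by (cases "\<nu> i") (auto simp: signed_meas_def)

  have core: "H \<gamma> Q P \<le> H (Ssym \<mu> T \<gamma>) Q P"
    if \<gamma>V: "\<gamma> \<in> V" and Q: "Q \<in> Prob M" and P: "P \<in> Prob M"
      and iQ: "invariant_meas M T Q" and iP: "invariant_meas M T P" for \<gamma> Q P
  proof (rule ccontr)
    assume "\<not> ?thesis"
    hence lt: "H (Ssym \<mu> T \<gamma>) Q P < H \<gamma> Q P" by simp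
    define c where "c = H \<gamma> Q P"
    define S where "S = Ssym \<mu> T \<gamma>"
    have SV: "S \<in> V" using V_sym \<gamma>V by (auto simp: S_def)
    have orbit: "H (\<gamma> \<circ> T \<sigma>) Q P = c" for \<sigma>
      using H_equiv[OF \<gamma>V Q P] iQ iP by (simp add: invariant_meas_def c_def)
    define \<S> where "\<S> = {{\<gamma> \<in> V. tau \<nu> \<gamma> \<in> U} | \<nu> U. (\<forall>i. \<nu> i \<in> signed_meas M) \<and> open U}"
    have top: "MX_topology M V = topology_generated_by \<S>" by (simp add: MX_topology_def \<S>_def)
    have Vtop: "V \<subseteq> topspace (MX_topology M V)"
    proof
      fix \<eta> assume \<eta>: "\<eta> \<in> V"
      define \<nu>0 where "\<nu>0 = (\<lambda>i::'n. (null_measure M, null_measure M))"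
      have fm: "finite_measure (null_measure M)" by (rule finite_measureI) simp
      have "\<forall>i. \<nu>0 i \<in> signed_meas M" using fm by (simp add: \<nu>0_def signed_meas_def)
      hence "{\<gamma> \<in> V. tau \<nu>0 \<gamma> \<in> UNIV} \<in> \<S>" unfolding \<S>_def by blast
      thus "\<eta> \<in> topspace (MX_topology M V)" using \<eta> top by auto
    qed
    define W where "W = {x \<in> topspace (MX_topology M V). H x Q P < c}"
    have "openin (MX_topology M V) W" using H_usc[OF Q P] unfolding usc_on_def W_def by blast
    hence gW: "generate_topology_on \<S> W" using top openin_topology_generated_by_iff by metis
    have SW: "S \<in> W" using SV Vtop lt by (auto simp: W_def c_def S_def)
    obtain F e where F: "finite F" "\<forall>\<nu>\<in>F. \<forall>i. \<nu> i \<in> signed_meas M" "e > 0"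
      and Fb: "\<forall>\<eta>\<in>V. (\<forall>\<nu>\<in>F. \<bar>tau \<nu> \<eta> - tau \<nu> S\<bar> < e) \<longrightarrow> \<eta> \<in> W"
      using nbhd_lemma[OF gW[unfolded \<S>_def] SW] by blast
    define \<phi> where "\<phi> \<nu> \<sigma> = tau \<nu> (\<gamma> \<circ> T \<sigma>)" for \<nu> \<sigma>
    define ap where "ap = (\<lambda>(\<nu> :: 'n \<Rightarrow> 'a measure \<times> 'a measure) i \<sigma>. (\<integral>x. \<gamma> (T \<sigma> x) $ i \<partial>(fst (\<nu> i))))"
    define am where "am = (\<lambda>(\<nu> :: 'n \<Rightarrow> 'a measure \<times> 'a measure) i \<sigma>. (\<integral>x. \<gamma> (T \<sigma> x) $ i \<partial>(snd (\<nu> i))))"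
    have \<phi>eq: "\<phi> \<nu> = (\<lambda>\<sigma>. \<Sum>i\<in>UNIV. ap \<nu> i \<sigma> - am \<nu> i \<sigma>)" for \<nu>
      by (simp add: fun_eq_iff \<phi>_def tau_def sintegral_def ap_def am_def)
    have \<phi>facts: "\<phi> \<nu> \<in> borel_measurable \<mu> \<and> (\<exists>B. \<forall>\<sigma>. \<bar>\<phi> \<nu> \<sigma>\<bar> \<le> B) \<and> integral\<^sup>L \<mu> (\<phi> \<nu>) = tau \<nu> S"
      if \<nu>F: "\<nu> \<in> F" for \<nu>
    proof -
      have sg: "\<nu> i \<in> signed_meas M" for i using F(2) \<nu>F by blast
      obtain Bf where Bf: "\<And>i x. \<bar>\<gamma> x $ i\<bar> \<le> Bf i" using Vbnd[OF \<gamma>V] by metis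
      have bnd': "\<And>s x. \<bar>\<gamma> (T s x) $ i\<bar> \<le> Bf i" for i using Bf by blast
      have FL: "(\<lambda>s. \<integral>x. \<gamma> (T s x) $ i \<partial>N) \<in> borel_measurable \<mu> \<and>
          (\<forall>s. \<bar>\<integral>x. \<gamma> (T s x) $ i \<partial>N\<bar> \<le> Bf i * measure N (space N)) \<and>
          (\<integral>s. (\<integral>x. \<gamma> (T s x) $ i \<partial>N) \<partial>\<mu>) = (\<integral>x. (\<integral>s. \<gamma> (T s x) $ i \<partial>\<mu>) \<partial>N)"
        if "finite_measure N" "sets N = sets M" for N i
        using fub_lemma[OF haar_prob(1) haar_prob(2) that prodm[OF \<gamma>V] bnd'] by blast
      have smi: "finite_measure (fst (\<nu> i))" "sets (fst (\<nu> i)) = sets M"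
          "finite_measure (snd (\<nu> i))" "sets (snd (\<nu> i)) = sets M" for i
        using sm[of \<nu> i, OF sg[of i]] by auto
      have fp: "(\<lambda>s. \<integral>x. \<gamma> (T s x) $ i \<partial>fst (\<nu> i)) \<in> borel_measurable \<mu> \<and>
          (\<forall>s. \<bar>\<integral>x. \<gamma> (T s x) $ i \<partial>fst (\<nu> i)\<bar> \<le> Bf i * measure (fst (\<nu> i)) (space (fst (\<nu> i)))) \<and>
          (\<integral>s. (\<integral>x. \<gamma> (T s x) $ i \<partial>fst (\<nu> i)) \<partial>\<mu>) = (\<integral>x. (\<integral>s. \<gamma> (T s x) $ i \<partial>\<mu>) \<partial>fst (\<nu> i))" for i
        by (rule FL[OF smi(1) smi(2)])
      have fm: "(\<lambda>s. \<integral>x. \<gamma> (T s x) $ i \<partial>snd (\<nu> i)) \<in> borel_measurable \<mu> \<and>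
          (\<forall>s. \<bar>\<integral>x. \<gamma> (T s x) $ i \<partial>snd (\<nu> i)\<bar> \<le> Bf i * measure (snd (\<nu> i)) (space (snd (\<nu> i)))) \<and>
          (\<integral>s. (\<integral>x. \<gamma> (T s x) $ i \<partial>snd (\<nu> i)) \<partial>\<mu>) = (\<integral>x. (\<integral>s. \<gamma> (T s x) $ i \<partial>\<mu>) \<partial>snd (\<nu> i))" for i
        by (rule FL[OF smi(3) smi(4)])
      have apm: "ap \<nu> i \<in> borel_measurable \<mu>" "am \<nu> i \<in> borel_measurable \<mu>" for i
        using fp[of i] fm[of i] by (simp_all add: ap_def am_def)
      define Cp where "Cp i = Bf i * measure (fst (\<nu> i)) (space (fst (\<nu> i)))" for i
      define Cm where "Cm i = Bf i * measure (snd (\<nu> i)) (space (snd (\<nu> i)))" for i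
      have apb: "\<bar>ap \<nu> i \<sigma>\<bar> \<le> Cp i" "\<bar>am \<nu> i \<sigma>\<bar> \<le> Cm i" for i \<sigma>
        using fp[of i] fm[of i] by (simp_all add: ap_def am_def Cp_def Cm_def)
      have api: "integrable \<mu> (ap \<nu> i)" "integrable \<mu> (am \<nu> i)" for i
        by (intro mu.integrable_const_bound[where B="Cp i"]; use apm apb in auto)
           (intro mu.integrable_const_bound[where B="Cm i"]; use apm apb in auto)
      have m: "\<phi> \<nu> \<in> borel_measurable \<mu>" unfolding \<phi>eq using apm by measurable
      have b: "\<bar>\<phi> \<nu> \<sigma>\<bar> \<le> (\<Sum>i\<in>UNIV. Cp i + Cm i)" for \<sigma>
      proof -
        have "\<bar>\<phi> \<nu> \<sigma>\<bar> \<le> (\<Sum>i\<in>UNIV. \<bar>ap \<nu> i \<sigma> - am \<nu> i \<sigma>\<bar>)" unfolding \<phi>eq by (rule sum_abs)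
        also have "\<dots> \<le> (\<Sum>i\<in>UNIV. Cp i + Cm i)"
        proof (rule sum_mono)
          fix i
          have "\<bar>ap \<nu> i \<sigma>\<bar> \<le> Cp i" "\<bar>am \<nu> i \<sigma>\<bar> \<le> Cm i" using apb by auto
          thus "\<bar>ap \<nu> i \<sigma> - am \<nu> i \<sigma>\<bar> \<le> Cp i + Cm i" by arith
        qed
        finally show ?thesis .
      qed
      have "integral\<^sup>L \<mu> (\<phi> \<nu>) = (\<Sum>i\<in>UNIV. integral\<^sup>L \<mu> (ap \<nu> i) - integral\<^sup>L \<mu> (am \<nu> i))"
        unfolding \<phi>eq using api by (simp add: Bochner_Integration.integral_sum)
      also have "\<dots> = tau \<nu> S"
        unfolding tau_def sintegral_def S_def Ssym_def ap_def am_def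
        using fp fm by simp
      finally show ?thesis using m b by blast
    qed
    have A1: "\<And>\<psi>. \<psi> \<in> \<phi> ` F \<Longrightarrow> \<psi> \<in> borel_measurable \<mu>"
      and A2: "\<And>\<psi>. \<psi> \<in> \<phi> ` F \<Longrightarrow> \<exists>B. \<forall>\<sigma>. \<bar>\<psi> \<sigma>\<bar> \<le> B" using \<phi>facts by auto
    have ex: "\<exists>I t. finite I \<and> (\<forall>\<sigma>\<in>I. 0 \<le> t \<sigma>) \<and> sum t I = 1 \<and>
       (\<forall>\<psi>\<in>\<phi> ` F. \<bar>(\<Sum>\<sigma>\<in>I. t \<sigma> * \<psi> \<sigma>) - integral\<^sup>L \<mu> \<psi>\<bar> < e)"
      by (rule approx_finite[OF haar_prob(1) sp_mu finite_imageI[OF F(1)]]) (use A1 A2 F(3) in auto)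
    then obtain I t where It0: "finite I \<and> (\<forall>\<sigma>\<in>I. 0 \<le> t \<sigma>) \<and> sum t I = 1 \<and>
       (\<forall>\<psi>\<in>\<phi> ` F. \<bar>(\<Sum>\<sigma>\<in>I. t \<sigma> * \<psi> \<sigma>) - integral\<^sup>L \<mu> \<psi>\<bar> < e)"
      by (elim exE) (rule that)
    hence I: "finite I" "\<forall>\<sigma>\<in>I. 0 \<le> t \<sigma>" "sum t I = 1"
      and It: "\<forall>\<psi>\<in>\<phi> ` F. \<bar>(\<Sum>\<sigma>\<in>I. t \<sigma> * \<psi> \<sigma>) - integral\<^sup>L \<mu> \<psi>\<bar> < e"
      by auto
    define \<eta> where "\<eta> = (\<lambda>x. \<Sum>\<sigma>\<in>I. t \<sigma> *\<^sub>R (\<gamma> \<circ> T \<sigma>) x)"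
    have \<eta>V: "\<eta> \<in> V" unfolding \<eta>_def
      by (rule V_finite_comb[OF V_zero V_add V_scale I(1)]) (use V_closed[OF \<gamma>V] in \<open>auto simp: comp_def\<close>)
    have "tau \<nu> \<eta> = (\<Sum>\<sigma>\<in>I. t \<sigma> * \<phi> \<nu> \<sigma>)" if "\<nu> \<in> F" for \<nu>
      unfolding \<eta>_def \<phi>_def
      by (rule tau_lin[OF I(1)]) (use sm F(2) that intN[OF \<gamma>V] in auto)
    hence "\<forall>\<nu>\<in>F. \<bar>tau \<nu> \<eta> - tau \<nu> S\<bar> < e" using It \<phi>facts by auto
    hence "\<eta> \<in> W" using Fb \<eta>V by blast
    hence "H \<eta> Q P < c" by (simp add: W_def)
    moreover have "c \<le> H \<eta> Q P" unfolding \<eta>_def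
      apply (rule concave_finite[where V=V and h="\<lambda>\<eta>. H \<eta> Q P" and g="\<lambda>\<sigma>. \<gamma> \<circ> T \<sigma>"])
      using V_zero V_add V_scale H_concave[OF Q P] I orbit V_closed[OF \<gamma>V] by auto
    ultimately show False by simp
  qed

  have inv1: "Ssym \<mu> T \<gamma> \<circ> T \<tau> = Ssym \<mu> T \<gamma>" if \<gamma>V: "\<gamma> \<in> V" for \<gamma> \<tau>
  proof (rule ext)
    fix x
    show "(Ssym \<mu> T \<gamma> \<circ> T \<tau>) x = Ssym \<mu> T \<gamma> x"
    proof (simp add: Ssym_def vec_eq_iff, intro allI)
      fix i
      define f where "f = (\<lambda>\<sigma>. \<gamma> (T \<sigma> x) $ i)"
      have fm: "f \<in> borel_measurable borel"
      proof -
        have "(\<lambda>\<sigma>. (\<sigma>, x)) \<in> measurable borel (borel \<Otimes>\<^sub>M M)" by (rule measurable_Pair2') (simp add: space_M)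
        from measurable_comp[OF this prodm[OF \<gamma>V, of i]] show ?thesis by (simp add: f_def comp_def)
      qed
      have am: "(\<lambda>\<sigma>. \<sigma> + \<tau>) \<in> measurable \<mu> borel"
      proof -
        have "(\<lambda>\<sigma>. \<sigma> + \<tau>) \<in> borel_measurable borel"
          by (intro borel_measurable_continuous_onI continuous_intros)
        thus ?thesis using measurable_cong_sets[OF haar_prob(2) refl] by blast
      qed
      have "(\<integral>\<sigma>. \<gamma> (T \<sigma> (T \<tau> x)) $ i \<partial>\<mu>) = (\<integral>\<sigma>. f (\<sigma> + \<tau>) \<partial>\<mu>)"
        by (simp add: f_def act_add)
      also have "\<dots> = integral\<^sup>L (distr \<mu> borel (\<lambda>\<sigma>. \<sigma> + \<tau>)) f"
        by (rule integral_distr[symmetric, OF am fm])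
      also have "\<dots> = (\<integral>\<sigma>. \<gamma> (T \<sigma> x) $ i \<partial>\<mu>)" by (simp add: haar_right f_def)
      finally show "(\<integral>\<sigma>. \<gamma> (T \<sigma> (T \<tau> x)) $ i \<partial>\<mu>) = (\<integral>\<sigma>. \<gamma> (T \<sigma> x) $ i \<partial>\<mu>)" .
    qed
  qed
  have inv2: "Ssym \<mu> T \<gamma> = \<gamma>" if "\<forall>\<sigma>. \<gamma> \<circ> T \<sigma> = \<gamma>" for \<gamma>
  proof -
    have "\<gamma> (T \<sigma> x) = \<gamma> x" for \<sigma> x using that by (metis comp_apply)
    thus ?thesis by (simp add: Ssym_def fun_eq_iff vec_eq_iff mu.prob_space)
  qed

  have part1: "\<forall>Q P. Q \<in> Prob M \<longrightarrow> P \<in> Prob M \<longrightarrow> invariant_meas M T Q \<longrightarrow> invariant_meas M T P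
            \<longrightarrow> DH H \<Gamma> Q P \<le> DH H (Ssym \<mu> T ` \<Gamma>) Q P"
  proof (intro allI impI)
    fix Q P assume a: "Q \<in> Prob M" "P \<in> Prob M" "invariant_meas M T Q" "invariant_meas M T P"
    show "DH H \<Gamma> Q P \<le> DH H (Ssym \<mu> T ` \<Gamma>) Q P"
      unfolding DH_def
      by (rule SUP_mono) (use core a Gamma_sub in blast)
  qed
  moreover have "Ssym \<mu> T ` \<Gamma> = Gamma_inv T \<Gamma>
            \<and> (\<forall>Q P. Q \<in> Prob M \<longrightarrow> P \<in> Prob M \<longrightarrow> invariant_meas M T Q \<longrightarrow> invariant_meas M T P
                 \<longrightarrow> DH H \<Gamma> Q P = DH H (Gamma_inv T \<Gamma>) Q P)" if sub: "Ssym \<mu> T ` \<Gamma> \<subseteq> \<Gamma>"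
  proof
    show eq: "Ssym \<mu> T ` \<Gamma> = Gamma_inv T \<Gamma>"
    proof
      show "Ssym \<mu> T ` \<Gamma> \<subseteq> Gamma_inv T \<Gamma>"
        using sub inv1 Gamma_sub by (auto simp: Gamma_inv_def)
      show "Gamma_inv T \<Gamma> \<subseteq> Ssym \<mu> T ` \<Gamma>"
      proof
        fix \<gamma> assume "\<gamma> \<in> Gamma_inv T \<Gamma>"
        hence "\<gamma> \<in> \<Gamma>" "Ssym \<mu> T \<gamma> = \<gamma>" using inv2 by (auto simp: Gamma_inv_def)
        thus "\<gamma> \<in> Ssym \<mu> T ` \<Gamma>" by (metis image_eqI)
      qed
    qed
    show "\<forall>Q P. Q \<in> Prob M \<longrightarrow> P \<in> Prob M \<longrightarrow> invariant_meas M T Q \<longrightarrow> invariant_meas M T P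
                 \<longrightarrow> DH H \<Gamma> Q P = DH H (Gamma_inv T \<Gamma>) Q P"
    proof (intro allI impI antisym)
      fix Q P assume a: "Q \<in> Prob M" "P \<in> Prob M" "invariant_meas M T Q" "invariant_meas M T P"
      show "DH H \<Gamma> Q P \<le> DH H (Gamma_inv T \<Gamma>) Q P" using part1 a eq by metis
      show "DH H (Gamma_inv T \<Gamma>) Q P \<le> DH H \<Gamma> Q P"
        unfolding DH_def by (rule SUP_subset_mono) (auto simp: Gamma_inv_def)
    qed
  qed
  ultimately show ?thesis by blast
qed

end
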